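(* Let $d\ge 2$ and let $\mathcal F$ be an affine invariant control family of globally Lipschitz maps $\mathbb R^d\to\mathbb R^d$. Then the control system with control family $\mathcal F$ possesses the exact universal interpolation property if and only if there exists $f=(f_1,\dots,f_d)\in\mathcal F$ such that at least one component $f_j:\mathbb R^d\to\mathbb R$ is non-linear, i.e. not of the form $x\mapsto a^\top x+c$ with $a\in\mathbb R^d$, $c\in\mathbb R$.
   Context: A control family is a set $\mathcal F$ of globally Lipschitz maps $\mathbb R^d\to\mathbb R^d$ (the right-hand sides $x\mapsto f(x;\theta)$, $\theta\in\Theta$, of the control system $\dot x=f(x;\theta(t))$ with piecewise constant controls). For $g\in\mathcal F$ and $t\ge0$, $\varphi^g_t$ denotes the time-$t$ flow map $x_0\mapsto x(t)$ of $\dot x=g(x)$, $x(0)=x_0$. Let $\Phi(\mathcal F,T)$ be the set of maps $\varphi^{f_k}_{t_k}\circ\cdots\circ\varphi^{f_1}_{t_1}$ with $k\ge1$, $f_1,\dots,f_k\in\mathcal F$, $t_i\ge0$, $t_1+\cdots+t_k=T$; set $\mathcal A_{\mathcal F,T}=\bigcup_{0\le t\le T}\Phi(\mathcal F,t)$ and $\mathcal A_{\mathcal F}=\bigcup_{T\ge0}\mathcal A_{\mathcal F,T}$ (the attainable set). $\mathcal F$ is affine invariant if $f\in\mathcal F$ implies $x\mapsto Wf(Ax-b)$ belongs to $\mathcal F$ for all $W,A\in\mathbb R^{d\times d}$, $b\in\mathbb R^d$. The system has the exact universal interpolation property if for every positive integer $N$ and every data $(x_1,y_1),\dots,(x_N,y_N)$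 in $\mathbb R^d\times\mathbb R^d$ with $x_i\ne x_j$ and $y_i\ne y_j$ for $i\ne j$, there is $\varphi\in\mathcal A_{\mathcal F}$ with $\varphi(x_i)=y_i$ for all $i$. *)

theory Defs
  imports "HOL-Analysis.Analysis"
begin

text \<open>Vectors in R^d are modelled as real^'n with d = CARD('n).\<close>

definition glob_lipschitz :: "(real^'n \<Rightarrow> real^'n) \<Rightarrow> bool" where
  "glob_lipschitz g \<longleftrightarrow> (\<exists>C. C-lipschitz_on UNIV g)"

text \<open>Time-t flow map of x' = g(x): the value at time t of the (for Lipschitz g unique)
  solution on [0,t] starting at x0.\<close>
definition flow :: "(real^'n \<Rightarrow> real^'n) \<Rightarrow> real \<Rightarrow> real^'n \<Rightarrow> real^'n" where
  "flow g t x0 = (THE y. \<exists>u. u 0 = x0 \<and> u t = y \<and>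
      (\<forall>s\<in>{0..t}. (u has_vector_derivative g (u s)) (at s within {0..t})))"

text \<open>Composition of flows: the list [(f1,t1),...,(fk,tk)] gives
  flow fk tk o ... o flow f1 t1.\<close>
fun comp_flows :: "((real^'n \<Rightarrow> real^'n) \<times> real) list \<Rightarrow> real^'n \<Rightarrow> real^'n" where
  "comp_flows [] = id"
| "comp_flows ((f, t) # ps) = comp_flows ps \<circ> flow f t"

definition Phi :: "(real^'n \<Rightarrow> real^'n) set \<Rightarrow> real \<Rightarrow> (real^'n \<Rightarrow> real^'n) set" where
  "Phi F T = {comp_flows ps | ps. ps \<noteq> [] \<and> (\<forall>(f, t) \<in> set ps. f \<in> F \<and> t \<ge> 0)
                \<and> sum_list (map snd ps) = T}"

definition attainable_T :: "(real^'n \<Rightarrow> real^'n) set \<Rightarrow> real \<Rightarrow> (real^'n \<Rightarrow> real^'n) set" where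
  "attainable_T F T = (\<Union>t\<in>{0..T}. Phi F t)"

definition attainable :: "(real^'n \<Rightarrow> real^'n) set \<Rightarrow> (real^'n \<Rightarrow> real^'n) set" where
  "attainable F = (\<Union>T\<in>{0..}. attainable_T F T)"

definition affine_invariant :: "(real^'n \<Rightarrow> real^'n) set \<Rightarrow> bool" where
  "affine_invariant F \<longleftrightarrow>
     (\<forall>f\<in>F. \<forall>W A :: real^'n^'n. \<forall>b. (\<lambda>x. W *v f (A *v x - b)) \<in> F)"

definition exact_universal_interpolation :: "(real^'n \<Rightarrow> real^'n) set \<Rightarrow> bool" where
  "exact_universal_interpolation F \<longleftrightarrow>
     (\<forall>N::nat. \<forall>xs ys :: nat \<Rightarrow> real^'n. N \<ge> 1 \<longrightarrow>
        inj_on xs {..<N} \<longrightarrow> inj_on ys {..<N} \<longrightarrow>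
        (\<exists>\<phi>\<in>attainable F. \<forall>i<N. \<phi> (xs i) = ys i))"

definition affine_scalar :: "(real^'n \<Rightarrow> real) \<Rightarrow> bool" where
  "affine_scalar h \<longleftrightarrow> (\<exists>a c. \<forall>x. h x = a \<bullet> x + c)"

end

theory Submission
  imports Defs
begin

lemma arith1: "(E::real) * (h * X + h * X) + h * (E * (- 2 * C)) * Y = h * (E * (- 2 * C * Y + 2 * X))"
  by (simp add: algebra_simps)

lemma lip_unique_aux:
  fixes G :: "'a::real_inner \<Rightarrow> 'a"
  assumes lip: "C-lipschitz_on UNIV G" and t: "0 \<le> t"
    and u1: "\<forall>s\<in>{0..t}. (u1 has_vector_derivative G (u1 s)) (at s within {0..t})"
    and u2: "\<forall>s\<in>{0..t}. (u2 has_vector_derivative G (u2 s)) (at s within {0..t})"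
    and init: "u1 0 = u2 0"
  shows "u1 t = u2 t"
proof -
  have C0: "0 \<le> C" using lip lipschitz_on_nonneg by blast
  define d where "d s = u1 s - u2 s" for s
  define \<phi> where "\<phi> s = exp (- 2 * C * s) * (d s \<bullet> d s)" for s
  have dd: "(d has_vector_derivative (G (u1 s) - G (u2 s))) (at s within {0..t})" if "s \<in> {0..t}" for s
    unfolding d_def using u1 u2 that by (auto intro!: derivative_eq_intros)
  have der: "(\<phi> has_derivative (\<lambda>h. h * (exp (- 2 * C * s) * (- 2 * C * (d s \<bullet> d s) + 2 * (d s \<bullet> (G (u1 s) - G (u2 s))))))) (at s within {0..t})"
    if "s \<in> {0..t}" for s
  proof -
    have "((\<lambda>s. d s \<bullet> d s) has_derivative (\<lambda>h. d s \<bullet> (h *\<^sub>R (G (u1 s) - G (u2 s))) + (h *\<^sub>R (G (u1 s) - G (u2 s))) \<bullet> d s)) (at s within {0..t})"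
      using dd[OF that] unfolding has_vector_derivative_def
      by (intro has_derivative_inner) auto
    moreover have "((\<lambda>s. exp (- 2 * C * s)) has_derivative (\<lambda>h. h * (exp (- 2 * C * s) * (- 2 * C)))) (at s within {0..t})"
      by (auto intro!: derivative_eq_intros simp: algebra_simps)
    ultimately have "(\<phi> has_derivative (\<lambda>h. exp (- 2 * C * s) * (d s \<bullet> (h *\<^sub>R (G (u1 s) - G (u2 s))) + (h *\<^sub>R (G (u1 s) - G (u2 s))) \<bullet> d s) + (h * (exp (- 2 * C * s) * (- 2 * C))) * (d s \<bullet> d s))) (at s within {0..t})"
      unfolding \<phi>_def by (rule has_derivative_mult[rotated])
    moreover have "(\<lambda>h. exp (- 2 * C * s) * (d s \<bullet> (h *\<^sub>R (G (u1 s) - G (u2 s))) + (h *\<^sub>R (G (u1 s) - G (u2 s))) \<bullet> d s) + (h * (exp (- 2 * C * s) * (- 2 * C))) * (d s \<bullet> d s))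
      = (\<lambda>h. h * (exp (- 2 * C * s) * (- 2 * C * (d s \<bullet> d s) + 2 * (d s \<bullet> (G (u1 s) - G (u2 s))))))"
    proof
      fix h
      have ic: "(G (u1 s) - G (u2 s)) \<bullet> d s = d s \<bullet> (G (u1 s) - G (u2 s))"
        by (rule inner_commute)
      show "exp (- 2 * C * s) * (d s \<bullet> (h *\<^sub>R (G (u1 s) - G (u2 s))) + (h *\<^sub>R (G (u1 s) - G (u2 s))) \<bullet> d s) + (h * (exp (- 2 * C * s) * (- 2 * C))) * (d s \<bullet> d s)
        = h * (exp (- 2 * C * s) * (- 2 * C * (d s \<bullet> d s) + 2 * (d s \<bullet> (G (u1 s) - G (u2 s)))))"
        unfolding inner_scaleR_right inner_scaleR_left ic by (rule arith1[of "exp (- 2 * C * s)" h "d s \<bullet> (G (u1 s) - G (u2 s))" C "d s \<bullet> d s"])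
    qed
    ultimately show ?thesis by simp
  qed
  have nonpos: "exp (- 2 * C * s) * (- 2 * C * (d s \<bullet> d s) + 2 * (d s \<bullet> (G (u1 s) - G (u2 s)))) \<le> 0" for s
  proof -
    have c1: "d s \<bullet> (G (u1 s) - G (u2 s)) \<le> norm (d s) * norm (G (u1 s) - G (u2 s))"
      by (rule norm_cauchy_schwarz)
    have "norm (G (u1 s) - G (u2 s)) \<le> C * norm (d s)"
      using lipschitz_onD[OF lip, of "u1 s" "u2 s"] by (simp add: d_def dist_norm)
    then have c2: "norm (d s) * norm (G (u1 s) - G (u2 s)) \<le> norm (d s) * (C * norm (d s))"
      by (rule mult_left_mono) simp
    have c3: "norm (d s) * (C * norm (d s)) = C * (norm (d s))^2"
      by (simp add: power2_eq_square)
    have c4: "(norm (d s))^2 = d s \<bullet> d s"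
      by (rule power2_norm_eq_inner)
    then have c5: "C * (norm (d s))^2 = C * (d s \<bullet> d s)" by simp
    have "d s \<bullet> (G (u1 s) - G (u2 s)) \<le> C * (d s \<bullet> d s)"
      using c1 c2 c3 c5 by linarith
    then have "- 2 * C * (d s \<bullet> d s) + 2 * (d s \<bullet> (G (u1 s) - G (u2 s))) \<le> 0"
      by linarith
    then show ?thesis
      by (rule mult_nonneg_nonpos[rotated]) simp
  qed
  have "\<exists>\<xi>\<in>{0..t}. \<phi> t - \<phi> 0 = (\<lambda>h. h * (exp (- 2 * C * \<xi>) * (- 2 * C * (d \<xi> \<bullet> d \<xi>) + 2 * (d \<xi> \<bullet> (G (u1 \<xi>) - G (u2 \<xi>)))))) (t - 0)"
    by (rule mvt_very_simple[OF t]) (rule der, simp)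
  then obtain \<xi> where eq: "\<phi> t - \<phi> 0 = (t - 0) * (exp (- 2 * C * \<xi>) * (- 2 * C * (d \<xi> \<bullet> d \<xi>) + 2 * (d \<xi> \<bullet> (G (u1 \<xi>) - G (u2 \<xi>)))))"
    by blast
  have "\<phi> 0 = 0" by (simp add: \<phi>_def d_def init)
  moreover have "(t - 0) * (exp (- 2 * C * \<xi>) * (- 2 * C * (d \<xi> \<bullet> d \<xi>) + 2 * (d \<xi> \<bullet> (G (u1 \<xi>) - G (u2 \<xi>))))) \<le> 0"
    using mult_nonneg_nonpos[OF _ nonpos[of \<xi>], of "t - 0"] t by simp
  ultimately have "\<phi> t \<le> 0" using eq by linarith
  then have "exp (- 2 * C * t) * (d t \<bullet> d t) \<le> 0" unfolding \<phi>_def .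
  moreover have "exp (- 2 * C * t) > 0" by simp
  ultimately have "d t \<bullet> d t \<le> 0"
    by (metis mult_le_0_iff not_less)
  then have "d t = 0" by (metis inner_ge_zero inner_eq_zero_iff order_antisym)
  then show ?thesis by (simp add: d_def)
qed

lemma flow_eq:
  fixes G :: "real^'n \<Rightarrow> real^'n"
  assumes lip: "C-lipschitz_on UNIV G" and t: "0 \<le> t" and u0: "u 0 = x0"
    and u: "\<forall>s\<in>{0..t}. (u has_vector_derivative G (u s)) (at s within {0..t})"
  shows "flow G t x0 = u t"
  unfolding flow_def
proof (rule the_equality)
  show "\<exists>ua. ua 0 = x0 \<and> ua t = u t \<and> (\<forall>s\<in>{0..t}. (ua has_vector_derivative G (ua s)) (at s within {0..t}))"
    using u0 u by blast
next
  fix y assume "\<exists>ua. ua 0 = x0 \<and> ua t = y \<and> (\<forall>s\<in>{0..t}. (ua has_vector_derivative G (ua s)) (at s within {0..t}))"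
  then obtain w where "w 0 = x0" "w t = y" "\<forall>s\<in>{0..t}. (w has_vector_derivative G (w s)) (at s within {0..t})" by blast
  then show "y = u t" using lip_unique_aux[OF lip t _ u] u0 by metis
qed


definition expser :: "('a::banach \<Rightarrow> 'a) \<Rightarrow> real \<Rightarrow> 'a \<Rightarrow> 'a" where
  "expser L t z = (\<Sum>k. (t ^ k / fact k) *\<^sub>R (L ^^ k) z)"

lemma funpow_bound:
  fixes L :: "'a::real_normed_vector \<Rightarrow> 'a"
  assumes "bounded_linear L" "\<And>x. norm (L x) \<le> B * norm x" "0 \<le> B"
  shows "norm ((L ^^ k) z) \<le> B ^ k * norm z"
proof (induction k)
  case 0 then show ?case by (simp add: funpow_0)
next
  case (Suc k)
  have "norm ((L ^^ Suc k) z) = norm (L ((L ^^ k) z))" by simp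
  also have "\<dots> \<le> B * norm ((L ^^ k) z)" by (rule assms(2))
  also have "\<dots> \<le> B * (B ^ k * norm z)" using Suc assms(3) by (rule mult_left_mono)
  finally show ?case by simp
qed

lemma funpow_linear:
  fixes L :: "'a::real_vector \<Rightarrow> 'a"
  assumes "linear L" shows "linear (L ^^ k)"
proof (induction k)
  case 0 show ?case using linear_id by (simp add: id_def)
next
  case (Suc k) then show ?case using linear_compose[OF Suc assms] by (simp add: o_def)
qed

lemma exp_bound_summable: "summable (\<lambda>k. (c::real) ^ k / fact k * d)"
  using summable_mult2[OF summable_exp[of c], of d] by (simp add: field_simps)

lemma expser_summable:
  fixes L :: "'a::banach \<Rightarrow> 'a"
  assumes "bounded_linear L"
  shows "summable (\<lambda>k. (t ^ k / fact k) *\<^sub>R (L ^^ k) z)"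
proof -
  obtain B where B: "\<And>x. norm (L x) \<le> B * norm x" "0 < B"
    using bounded_linear.pos_bounded[OF assms] by (auto simp: mult.commute)
  show ?thesis
  proof (rule summable_comparison_test'[where g="\<lambda>k. (\<bar>t\<bar> * B) ^ k / fact k * norm z" and N=0])
    show "summable (\<lambda>k. (\<bar>t\<bar> * B) ^ k / fact k * norm z)" by (rule exp_bound_summable)
    fix k :: nat
    have "norm ((t ^ k / fact k) *\<^sub>R (L ^^ k) z) = \<bar>t\<bar> ^ k / fact k * norm ((L ^^ k) z)"
      by (simp add: power_abs)
    also have "\<dots> \<le> \<bar>t\<bar> ^ k / fact k * (B ^ k * norm z)"
      by (intro mult_left_mono funpow_bound[OF assms B(1)]) (use B in auto)
    finally show "norm ((t ^ k / fact k) *\<^sub>R (L ^^ k) z) \<le> (\<bar>t\<bar> * B) ^ k / fact k * norm z"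
      by (simp add: power_mult_distrib field_simps)
  qed
qed

lemma expser_0: "expser L 0 z = z"
proof -
  have "(\<lambda>k. ((0::real) ^ k / fact k) *\<^sub>R (L ^^ k) z) sums ((\<Sum>k<1. ((0::real) ^ k / fact k) *\<^sub>R (L ^^ k) z))"
    by (rule sums_finite) auto
  then show ?thesis unfolding expser_def by (simp add: sums_iff)
qed

lemma expser_linear:
  fixes L :: "'a::banach \<Rightarrow> 'a"
  assumes "bounded_linear L"
  shows "linear (expser L t)"
proof (rule linearI)
  have lin: "linear (L ^^ k)" for k using funpow_linear assms bounded_linear.linear by blast
  fix x y :: 'a and c :: real
  show "expser L t (x + y) = expser L t x + expser L t y"
    unfolding expser_def
    using suminf_add[OF expser_summable[OF assms, of t x] expser_summable[OF assms, of t y]]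
    by (simp add: linear_add[OF lin] scaleR_add_right)
  show "expser L t (c *\<^sub>R x) = c *\<^sub>R expser L t x"
    unfolding expser_def
    using suminf_scaleR_right[OF expser_summable[OF assms, of t x], of c]
    by (simp add: linear_scale[OF lin] scaleR_left_commute ac_simps)
qed

lemma nat_pow_bound:
  assumes "(1::real) \<le> R"
  shows "real n * R ^ (n - 1) \<le> (2 * R) ^ n"
proof -
  have "real n \<le> 2 ^ n"
    using less_exp[of n] by (metis less_imp_le of_nat_le_iff of_nat_numeral of_nat_power)
  moreover have "R ^ (n - 1) \<le> R ^ n"
    using assms by (intro power_increasing) auto
  ultimately have "real n * R ^ (n - 1) \<le> 2 ^ n * R ^ n"
    using assms by (intro mult_mono) auto
  then show ?thesis by (simp add: power_mult_distrib)
qed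

lemma expser_deriv:
  fixes L :: "'a::banach \<Rightarrow> 'a"
  assumes bl: "bounded_linear L"
  shows "((\<lambda>t. expser L t z) has_vector_derivative L (expser L t z)) (at t)"
proof -
  obtain B where B: "\<And>x. norm (L x) \<le> B * norm x" "0 < B"
    using bounded_linear.pos_bounded[OF bl] by (auto simp: mult.commute)
  define R where "R = \<bar>t\<bar> + 1"
  have R1: "1 \<le> R" by (simp add: R_def)
  define v where "v k = (L ^^ k) z" for k
  define f where "f n x = (x ^ n / fact n) *\<^sub>R v n" for n and x :: real
  define d where "d n x = (of_nat n * x ^ (n - 1) / fact n) *\<^sub>R v n" for n and x :: real
  define S where "S = ball (0::real) R"
  have tS: "t \<in> S" by (simp add: S_def R_def)
  have fd: "(f n has_derivative (\<lambda>h. h *\<^sub>R d n x)) (at x within S)" for n x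
  proof -
    have "((\<lambda>x. x ^ n / fact n) has_real_derivative (of_nat n * x ^ (n - 1) / fact n)) (at x within S)"
      by (auto intro!: derivative_eq_intros)
    then have "((\<lambda>x. (x ^ n / fact n) *\<^sub>R v n) has_vector_derivative ((x ^ n / fact n) *\<^sub>R 0 + (of_nat n * x ^ (n - 1) / fact n) *\<^sub>R v n)) (at x within S)"
      by (rule has_vector_derivative_scaleR[OF _ has_vector_derivative_const])
    then show ?thesis unfolding has_vector_derivative_def f_def d_def by simp
  qed
  have dbound: "norm (d n x) \<le> (2 * R * B) ^ n / fact n * norm z" if "x \<in> S" for n x
  proof -
    have xR: "\<bar>x\<bar> \<le> R" using that by (simp add: S_def)
    have "norm (d n x) = real n * \<bar>x\<bar> ^ (n - 1) / fact n * norm (v n)"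
      by (simp add: d_def power_abs abs_mult)
    also have "\<dots> \<le> real n * R ^ (n - 1) / fact n * (B ^ n * norm z)"
      unfolding v_def
      by (intro mult_mono divide_right_mono power_mono funpow_bound[OF bl B(1)]) (use xR B in auto)
    also have "\<dots> \<le> (2 * R) ^ n / fact n * (B ^ n * norm z)"
      by (intro mult_right_mono divide_right_mono nat_pow_bound R1) (use B in auto)
    also have "\<dots> = (2 * R * B) ^ n / fact n * norm z"
      by (simp add: power_mult_distrib)
    finally show ?thesis .
  qed
  have sumM: "summable (\<lambda>n. (2 * R * B) ^ n / fact n * norm z)" by (rule exp_bound_summable)
  have unif: "uniform_limit S (\<lambda>n x. \<Sum>i<n. d i x) (\<lambda>x. \<Sum>i. d i x) sequentially"
    by (rule Weierstrass_m_test[OF dbound sumM])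
  have cond: "\<forall>\<^sub>F n in sequentially. \<forall>x\<in>S. \<forall>h. norm ((\<Sum>i<n. h *\<^sub>R d i x) - h *\<^sub>R (\<Sum>i. d i x)) \<le> e * norm h"
    if "e > 0" for e
  proof -
    from unif that have "\<forall>\<^sub>F n in sequentially. \<forall>x\<in>S. dist (\<Sum>i<n. d i x) (\<Sum>i. d i x) < e"
      unfolding uniform_limit_iff by blast
    then show ?thesis
    proof eventually_elim
      case (elim n)
      show ?case
      proof (intro ballI allI)
        fix x h assume "x \<in> S"
        have "norm ((\<Sum>i<n. h *\<^sub>R d i x) - h *\<^sub>R (\<Sum>i. d i x)) = \<bar>h\<bar> * norm ((\<Sum>i<n. d i x) - (\<Sum>i. d i x))"
          by (simp add: scaleR_sum_right[symmetric] scaleR_diff_right[symmetric])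
        also have "\<dots> \<le> \<bar>h\<bar> * e"
          using elim \<open>x \<in> S\<close> by (intro mult_left_mono) (auto simp: dist_norm less_imp_le)
        finally show "norm ((\<Sum>i<n. h *\<^sub>R d i x) - h *\<^sub>R (\<Sum>i. d i x)) \<le> e * norm h"
          by (simp add: mult.commute)
      qed
    qed
  qed
  have sumt: "(\<lambda>n. f n t) sums expser L t z"
    unfolding f_def v_def expser_def using expser_summable[OF bl] by (rule summable_sums)
  obtain g where g: "\<forall>x\<in>S. (\<lambda>n. f n x) sums g x \<and> (g has_derivative (\<lambda>h. h *\<^sub>R (\<Sum>i. d i x))) (at x within S)"
    using has_derivative_series[of S f "\<lambda>n x h. h *\<^sub>R d n x" "\<lambda>x h. h *\<^sub>R (\<Sum>i. d i x)", OF _ fd cond tS sumt]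
    by (auto simp: S_def)
  have geq: "g x = expser L x z" if "x \<in> S" for x
    using g that sums_unique unfolding f_def v_def expser_def by blast
  have "(g has_derivative (\<lambda>h. h *\<^sub>R (\<Sum>i. d i t))) (at t)"
  proof -
    have "at t within S = at t" using tS by (intro at_within_open) (auto simp: S_def)
    then show ?thesis using g tS by metis
  qed
  then have "((\<lambda>x. expser L x z) has_derivative (\<lambda>h. h *\<^sub>R (\<Sum>i. d i t))) (at t)"
    by (rule has_derivative_transform_within_open[where s=S]) (use tS geq in \<open>auto simp: S_def\<close>)
  moreover have "(\<Sum>i. d i t) = L (expser L t z)"
  proof -
    have sd: "summable (\<lambda>i. d i t)"
      by (rule summable_comparison_test'[OF sumM, of 0]) (use dbound tS in auto)
    have d0: "d 0 t = 0" by (simp add: d_def)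
    have s1: "(\<lambda>i. d (Suc i) t) sums (\<Sum>i. d i t)"
      using sums_Suc_iff[of "\<lambda>i. d i t" "\<Sum>i. d i t"] summable_sums[OF sd] d0 by simp
    have "(\<lambda>i. L ((t ^ i / fact i) *\<^sub>R v i)) sums L (expser L t z)"
      unfolding expser_def v_def
      by (rule bounded_linear.sums[OF bl summable_sums[OF expser_summable[OF bl]]])
    moreover have "L ((t ^ i / fact i) *\<^sub>R v i) = d (Suc i) t" for i
    proof -
      have co: "real (Suc i) * t ^ (Suc i - 1) / fact (Suc i) = t ^ i / fact i"
        unfolding fact_Suc by (simp del: of_nat_Suc)
      show ?thesis
        unfolding d_def co by (simp add: v_def linear_scale[OF bounded_linear.linear[OF bl]])
    qed
    ultimately have "(\<lambda>i. d (Suc i) t) sums L (expser L t z)" by simp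
    with s1 show ?thesis using sums_unique2 by blast
  qed
  ultimately show ?thesis unfolding has_vector_derivative_def by simp
qed


definition aff_map :: "(real^'n \<Rightarrow> real^'n) \<Rightarrow> bool" where
  "aff_map \<phi> \<longleftrightarrow> (\<forall>x y s. \<phi> ((1 - s) *\<^sub>R x + s *\<^sub>R y) = (1 - s) *\<^sub>R \<phi> x + s *\<^sub>R \<phi> y)"

lemma affine_field_linear:
  fixes f :: "real^'n \<Rightarrow> real^'n"
  assumes "\<forall>j. affine_scalar (\<lambda>x. f x $ j)"
  shows "linear (\<lambda>x. f x - f 0)"
proof -
  from assms obtain a c where ac: "\<And>j x. f x $ j = a j \<bullet> x + c j"
    unfolding affine_scalar_def by metis
  show ?thesis
  proof (rule linearI)
    fix x y :: "real^'n" and r :: real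
    show "f (x + y) - f 0 = f x - f 0 + (f y - f 0)"
      by (simp add: vec_eq_iff ac inner_add_right)
    show "f (r *\<^sub>R x) - f 0 = r *\<^sub>R (f x - f 0)"
      by (simp add: vec_eq_iff ac)
  qed
qed

lemma flow_affine:
  fixes f :: "real^'n \<Rightarrow> real^'n"
  assumes aff: "\<forall>j. affine_scalar (\<lambda>x. f x $ j)" and lip: "C-lipschitz_on UNIV f" and t: "0 \<le> t"
  shows "aff_map (flow f t)"
proof -
  define lin where "lin x = f x - f 0" for x
  have linl: "linear lin" using affine_field_linear[OF aff] unfolding lin_def .
  define L :: "(real^'n) \<times> real \<Rightarrow> (real^'n) \<times> real" where "L p = (lin (fst p) + snd p *\<^sub>R f 0, 0)" for p
  have "linear L"
  proof (rule linearI)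
    fix p q :: "(real^'n) \<times> real" and r :: real
    show "L (p + q) = L p + L q"
      by (simp add: L_def linear_add[OF linl] scaleR_add_left)
    show "L (r *\<^sub>R p) = r *\<^sub>R L p"
      by (simp add: L_def linear_scale[OF linl] scaleR_add_right)
  qed
  then have bl: "bounded_linear L" by (simp add: linear_conv_bounded_linear)
  have sol: "flow f t x0 = fst (expser L t (x0, 1))" for x0
  proof -
    define U where "U s = expser L s (x0, 1)" for s
    have dU: "(U has_vector_derivative L (U s)) (at s)" for s
      unfolding U_def by (rule expser_deriv[OF bl])
    have "((\<lambda>s. snd (U s)) has_derivative (\<lambda>h. 0)) (at s within UNIV)" for s
      using bounded_linear.has_vector_derivative[OF bounded_linear_snd dU[of s]]
      by (simp add: has_vector_derivative_def L_def)
    then obtain c where "\<forall>s\<in>UNIV. snd (U s) = c"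
      using has_derivative_zero_constant[of UNIV "\<lambda>s. snd (U s)"] by auto
    moreover have "snd (U 0) = 1" by (simp add: U_def expser_0)
    ultimately have snd1: "snd (U s) = 1" for s by simp
    have "((\<lambda>s. fst (U s)) has_vector_derivative f (fst (U s))) (at s within {0..t})" for s
    proof -
      have "((\<lambda>s. fst (U s)) has_vector_derivative fst (L (U s))) (at s)"
        by (rule bounded_linear.has_vector_derivative[OF bounded_linear_fst dU])
      moreover have "fst (L (U s)) = f (fst (U s))"
        by (simp add: L_def snd1 lin_def)
      ultimately show ?thesis by (simp add: has_vector_derivative_at_within)
    qed
    then have "flow f t x0 = fst (U t)"
      by (intro flow_eq[OF lip t]) (auto simp: U_def expser_0)
    then show ?thesis by (simp add: U_def)
  qed
  show ?thesis
    unfolding aff_map_def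
  proof (intro allI)
    fix x y :: "real^'n" and s :: real
    have lin2: "linear (expser L t)" by (rule expser_linear[OF bl])
    have "((1 - s) *\<^sub>R x + s *\<^sub>R y, 1::real) = (1 - s) *\<^sub>R (x, 1) + s *\<^sub>R (y, 1)"
      by (simp add: algebra_simps)
    then have "expser L t ((1 - s) *\<^sub>R x + s *\<^sub>R y, 1) = expser L t ((1 - s) *\<^sub>R (x, 1) + s *\<^sub>R (y, 1))"
      by simp
    also have "\<dots> = (1 - s) *\<^sub>R expser L t (x, 1) + s *\<^sub>R expser L t (y, 1)"
      by (simp only: linear_add[OF lin2] linear_scale[OF lin2])
    finally have "expser L t ((1 - s) *\<^sub>R x + s *\<^sub>R y, 1) = (1 - s) *\<^sub>R expser L t (x, 1) + s *\<^sub>R expser L t (y, 1)" .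
    then show "flow f t ((1 - s) *\<^sub>R x + s *\<^sub>R y) = (1 - s) *\<^sub>R flow f t x + s *\<^sub>R flow f t y"
      by (simp add: sol)
  qed
qed


lemma attainable_char:
  "\<phi> \<in> attainable F \<longleftrightarrow> (\<exists>ps. ps \<noteq> [] \<and> (\<forall>(f, t) \<in> set ps. f \<in> F \<and> t \<ge> 0) \<and> \<phi> = comp_flows ps)"
proof
  assume "\<phi> \<in> attainable F"
  then show "\<exists>ps. ps \<noteq> [] \<and> (\<forall>(f, t) \<in> set ps. f \<in> F \<and> t \<ge> 0) \<and> \<phi> = comp_flows ps"
    unfolding attainable_def attainable_T_def Phi_def by blast
next
  assume "\<exists>ps. ps \<noteq> [] \<and> (\<forall>(f, t) \<in> set ps. f \<in> F \<and> t \<ge> 0) \<and> \<phi> = comp_flows ps"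
  then obtain ps where ps: "ps \<noteq> []" "\<forall>(f, t) \<in> set ps. f \<in> F \<and> t \<ge> 0" "\<phi> = comp_flows ps" by blast
  define T where "T = sum_list (map snd ps)"
  have "T \<ge> 0" unfolding T_def using ps(2) by (intro sum_list_nonneg) auto
  moreover have "\<phi> \<in> Phi F T" unfolding Phi_def T_def using ps by blast
  ultimately show "\<phi> \<in> attainable F"
    unfolding attainable_def attainable_T_def by (auto intro!: bexI[of _ T])
qed

lemma aff_map_comp: "aff_map g \<Longrightarrow> aff_map h \<Longrightarrow> aff_map (g \<circ> h)"
  unfolding aff_map_def by simp

lemma aff_map_id: "aff_map id"
  unfolding aff_map_def by simp

lemma aff_map_id': "aff_map (\<lambda>x. x)"
  unfolding aff_map_def by simp

lemma comp_flows_aff: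
  "(\<forall>(f, t) \<in> set ps. aff_map (flow f t)) \<Longrightarrow> aff_map (comp_flows ps)"
proof (induction ps)
  case Nil then show ?case by (simp add: aff_map_id')
next
  case (Cons p ps)
  obtain f t where p: "p = (f, t)" by fastforce
  from Cons have "aff_map (comp_flows ps)" "aff_map (flow f t)" by (auto simp: p)
  then have "aff_map (comp_flows ps \<circ> flow f t)" by (rule aff_map_comp)
  then show ?case by (simp add: p o_def)
qed

lemma two_indices:
  assumes "CARD('n) \<ge> 2"
  obtains j1 j2 :: "'n::finite" where "j1 \<noteq> j2"
proof -
  have "\<exists>j1 j2 :: 'n. j1 \<noteq> j2"
  proof (rule ccontr)
    assume "\<not> ?thesis"
    then have "(UNIV :: 'n set) \<subseteq> {undefined}" by auto
    then have "CARD('n) \<le> card {undefined :: 'n}" by (intro card_mono) auto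
    then show False using assms by simp
  qed
  then show ?thesis using that by blast
qed

lemma no_interp_if_affine:
  fixes F :: "(real^'n \<Rightarrow> real^'n) set"
  assumes card: "CARD('n) \<ge> 2" and aff: "\<forall>\<phi>\<in>attainable F. aff_map \<phi>"
  shows "\<not> exact_universal_interpolation F"
proof
  assume eui: "exact_universal_interpolation F"
  obtain j1 j2 :: 'n where j: "j1 \<noteq> j2" using two_indices[OF card] by blast
  define e :: "real^'n" where "e = axis j1 1"
  define e' :: "real^'n" where "e' = axis j2 1"
  define xs :: "nat \<Rightarrow> real^'n" where "xs i = real i *\<^sub>R e" for i
  define ys :: "nat \<Rightarrow> real^'n" where "ys i = (if i = 0 then 0 else if i = 1 then e else e')" for i
  have e0: "e \<noteq> 0" by (simp add: e_def)
  have "inj_on xs {..<3}"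
    unfolding xs_def inj_on_def using e0 by auto
  moreover have "inj_on ys {..<3}"
  proof -
    have "e \<noteq> e'" "e' \<noteq> 0" using j by (auto simp: e_def e'_def axis_eq_axis)
    then show ?thesis unfolding ys_def inj_on_def using e0 by (auto simp: less_Suc_eq numeral_3_eq_3)
  qed
  ultimately obtain \<phi> where \<phi>: "\<phi> \<in> attainable F" "\<forall>i<3. \<phi> (xs i) = ys i"
    using eui unfolding exact_universal_interpolation_def by (metis le_numeral_extra(4) one_le_numeral)
  have a: "aff_map \<phi>" using aff \<phi>(1) by blast
  have "\<phi> (xs 2) = \<phi> ((1 - 2) *\<^sub>R 0 + 2 *\<^sub>R e)" by (simp add: xs_def)
  also have "\<dots> = (1 - 2) *\<^sub>R \<phi> 0 + (2::real) *\<^sub>R \<phi> e"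
    using a unfolding aff_map_def by blast
  also have "\<phi> 0 = 0" using \<phi>(2)[rule_format, of 0] by (simp add: xs_def ys_def)
  also have "\<phi> e = e" using \<phi>(2)[rule_format, of 1] by (simp add: xs_def ys_def)
  finally have "\<phi> (xs 2) = 2 *\<^sub>R e" by simp
  moreover have "\<phi> (xs 2) = e'" using \<phi>(2)[rule_format, of 2] by (simp add: ys_def)
  ultimately have "(2 *\<^sub>R e) $ j1 = e' $ j1" by simp
  then show False using j by (simp add: e_def e'_def axis_def)
qed

lemma dir1:
  fixes F :: "(real^'n \<Rightarrow> real^'n) set"
  assumes card: "CARD('n) \<ge> 2" and lip: "\<forall>g\<in>F. glob_lipschitz g"
    and eui: "exact_universal_interpolation F"
  shows "\<exists>f\<in>F. \<exists>j. \<not> affine_scalar (\<lambda>x. f x $ j)"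
proof (rule ccontr)
  assume "\<not> ?thesis"
  then have allaff: "\<forall>f\<in>F. \<forall>j. affine_scalar (\<lambda>x. f x $ j)" by blast
  have "\<forall>\<phi>\<in>attainable F. aff_map \<phi>"
  proof
    fix \<phi> assume "\<phi> \<in> attainable F"
    then obtain ps where ps: "\<forall>(f, t) \<in> set ps. f \<in> F \<and> t \<ge> 0" "\<phi> = comp_flows ps"
      unfolding attainable_char by blast
    have "\<forall>(f, t) \<in> set ps. aff_map (flow f t)"
    proof (intro ballI, clarify)
      fix f t assume "(f, t) \<in> set ps"
      then have "f \<in> F" "t \<ge> 0" using ps(1) by auto
      moreover obtain C where "C-lipschitz_on UNIV f" using lip \<open>f \<in> F\<close> unfolding glob_lipschitz_def by blast
      ultimately show "aff_map (flow f t)" using flow_affine allaff by blast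
    qed
    then show "aff_map \<phi>" using ps(2) comp_flows_aff by simp
  qed
  then show False using no_interp_if_affine[OF card] eui by blast
qed


definition lip1 :: "(real \<Rightarrow> real) \<Rightarrow> bool" where
  "lip1 f \<longleftrightarrow> (\<exists>L. \<forall>x y. \<bar>f x - f y\<bar> \<le> L * \<bar>x - y\<bar>)"

definition Dq :: "real \<Rightarrow> (real \<Rightarrow> real) \<Rightarrow> real \<Rightarrow> real" where
  "Dq e f x = (f (x + e) - f x) / e"

definition Mv :: "real \<Rightarrow> (real \<Rightarrow> real) \<Rightarrow> real \<Rightarrow> real" where
  "Mv e f x = integral {0..e} (\<lambda>u. f (x + u)) / e"

definition aff1 :: "(real \<Rightarrow> real) \<Rightarrow> bool" where
  "aff1 f \<longleftrightarrow> (\<exists>a c. \<forall>x. f x = a * x + c)"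

definition ann :: "real set \<Rightarrow> (real \<Rightarrow> real) \<Rightarrow> (real \<Rightarrow> real) \<Rightarrow> bool" where
  "ann T w f \<longleftrightarrow> (\<forall>a b. (\<Sum>t\<in>T. w t * f (a * t + b)) = 0)"

lemma lip1_cont: "lip1 f \<Longrightarrow> continuous_on UNIV f"
proof -
  assume "lip1 f"
  then obtain L where L: "\<And>x y. \<bar>f x - f y\<bar> \<le> L * \<bar>x - y\<bar>" unfolding lip1_def by blast
  have "\<bar>f 1 - f 0\<bar> \<le> L" using L[of 1 0] by simp
  then have L0: "L \<ge> 0" using abs_ge_zero[of "f 1 - f 0"] by linarith
  have "L-lipschitz_on UNIV f"
    by (rule lipschitz_onI) (use L L0 in \<open>auto simp: dist_real_def\<close>)
  then show ?thesis by (rule lipschitz_on_continuous_on)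
qed

lemma lip1_Dq: "lip1 f \<Longrightarrow> e \<noteq> 0 \<Longrightarrow> lip1 (Dq e f)"
proof -
  assume "lip1 f" "e \<noteq> 0"
  then obtain L where L: "\<And>x y. \<bar>f x - f y\<bar> \<le> L * \<bar>x - y\<bar>" unfolding lip1_def by blast
  have "\<bar>Dq e f x - Dq e f y\<bar> \<le> (2 * L / \<bar>e\<bar>) * \<bar>x - y\<bar>" for x y
  proof -
    have "\<bar>Dq e f x - Dq e f y\<bar> = \<bar>(f (x + e) - f (y + e)) - (f x - f y)\<bar> / \<bar>e\<bar>"
      by (simp add: Dq_def diff_divide_distrib[symmetric] abs_divide algebra_simps)
    also have "\<dots> \<le> (\<bar>f (x + e) - f (y + e)\<bar> + \<bar>f x - f y\<bar>) / \<bar>e\<bar>"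
      by (intro divide_right_mono abs_triangle_ineq4) simp
    also have "\<dots> \<le> (L * \<bar>x - y\<bar> + L * \<bar>x - y\<bar>) / \<bar>e\<bar>"
      using L[of "x + e" "y + e"] L[of x y] by (intro divide_right_mono add_mono) auto
    finally show ?thesis by (simp add: field_simps)
  qed
  then show "lip1 (Dq e f)" unfolding lip1_def by blast
qed

lemma cont_Dq: "continuous_on UNIV f \<Longrightarrow> continuous_on UNIV (Dq e f)"
proof -
  assume cf: "continuous_on UNIV f"
  have "continuous_on UNIV (\<lambda>x. f (x + e))"
    by (rule continuous_on_compose2[OF cf]) (auto intro!: continuous_intros)
  then have "continuous_on UNIV (\<lambda>x. (f (x + e) - f x) * inverse e)"
    by (intro continuous_on_mult_right continuous_on_diff cf)
  then show ?thesis unfolding Dq_def by (simp add: divide_inverse)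
qed

lemma cont_shift: "continuous_on UNIV f \<Longrightarrow> continuous_on S (\<lambda>x. f (c + x))" for f :: "real \<Rightarrow> real"
proof -
  assume cf: "continuous_on UNIV f"
  have "continuous_on UNIV (\<lambda>x::real. c + x)" by (intro continuous_intros)
  then have "continuous_on UNIV (\<lambda>x. f (c + x))"
    using continuous_on_compose2[OF cf] by blast
  then show ?thesis by (rule continuous_on_subset) simp
qed

lemma Mv_alt: "Mv e f x = integral {x..x + e} f / e"
proof -
  have "integral {x - x..x + e - x} (\<lambda>u. f (u + x)) = integral {x..x + e} f"
    by (rule integral_shift_real_ivl)
  then show ?thesis unfolding Mv_def by (simp add: add.commute)
qed

lemma Mv_deriv:
  assumes cf: "continuous_on UNIV f" and e: "e > 0"
  shows "(Mv e f has_real_derivative Dq e f x) (at x)"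
proof -
  define a where "a = x - 1"
  define b where "b = x + e + 1"
  define G where "G y = integral {a..y} f" for y
  have cab: "continuous_on {a..b} f" using cf by (rule continuous_on_subset) auto
  have Gd: "(G has_real_derivative f y) (at y)" if "a < y" "y < b" for y
  proof -
    have "(G has_real_derivative f y) (at y within {a..b})"
      unfolding G_def by (rule integral_has_real_derivative[OF cab]) (use that in auto)
    then show ?thesis using at_within_Icc_at[OF that] by simp
  qed
  have d1: "((\<lambda>y. G (y + e)) has_real_derivative f (x + e) * 1) (at x)"
    using e by (intro DERIV_chain2[OF Gd]) (auto simp: a_def b_def intro!: derivative_eq_intros)
  have d2: "(G has_real_derivative f x) (at x)"
    using e by (intro Gd) (auto simp: a_def b_def)
  have d3: "((\<lambda>y. (G (y + e) - G y) / e) has_real_derivative (f (x + e) * 1 - f x) / e) (at x)"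
    by (intro DERIV_cdivide DERIV_diff d1 d2)
  show ?thesis
  proof (rule has_field_derivative_transform_within_open[OF _ _ _ ])
    show "((\<lambda>y. (G (y + e) - G y) / e) has_real_derivative Dq e f x) (at x)"
      using d3 by (simp add: Dq_def)
    show "open {a<..<b - e}" by simp
    show "x \<in> {a<..<b - e}" by (simp add: a_def b_def)
    fix y assume y: "y \<in> {a<..<b - e}"
    have "integral {a..y} f + integral {y..y + e} f = integral {a..y + e} f"
      by (rule Henstock_Kurzweil_Integration.integral_combine) (use y e in \<open>auto intro!: integrable_continuous_real continuous_on_subset[OF cf]\<close>)
    then show "(G (y + e) - G y) / e = Mv e f y"
      by (simp add: Mv_alt G_def algebra_simps)
  qed
qed

lemma ann_Dq:
  assumes "ann T w f" shows "ann T w (Dq e f)"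
  unfolding ann_def
proof (intro allI)
  fix a b
  have "(\<Sum>t\<in>T. w t * Dq e f (a * t + b)) = ((\<Sum>t\<in>T. w t * f (a * t + (b + e))) - (\<Sum>t\<in>T. w t * f (a * t + b))) / e"
    by (simp add: Dq_def sum_divide_distrib[symmetric] sum_subtractf[symmetric] algebra_simps)
  also have "\<dots> = 0" using assms unfolding ann_def by simp
  finally show "(\<Sum>t\<in>T. w t * Dq e f (a * t + b)) = 0" .
qed

lemma ann_Mv:
  assumes cf: "continuous_on UNIV f" and fin: "finite T" and an: "ann T w f"
  shows "ann T w (Mv e f)"
  unfolding ann_def
proof (intro allI)
  fix a b
  have int: "(\<lambda>u. w t * f (a * t + b + u)) integrable_on {0..e}" for t
    by (intro integrable_continuous_real continuous_on_mult_left cont_shift[OF cf])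
  have "(\<Sum>t\<in>T. w t * Mv e f (a * t + b)) = (\<Sum>t\<in>T. integral {0..e} (\<lambda>u. w t * f (a * t + b + u))) / e"
    unfolding Mv_def by (simp add: sum_divide_distrib)
  also have "\<dots> = integral {0..e} (\<lambda>u. \<Sum>t\<in>T. w t * f (a * t + b + u)) / e"
    by (subst integral_sum[OF fin]) (use int in auto)
  also have "\<dots> = 0" using an unfolding ann_def by (simp add: add.assoc)
  finally show "(\<Sum>t\<in>T. w t * Mv e f (a * t + b)) = 0" .
qed


lemma ann_step:
  assumes cf: "continuous_on UNIV f" and fin: "finite T" and an: "ann T w f" and e: "e > 0"
  shows "ann T (\<lambda>t. w t * (t - c)) (Dq e f)"
proof -
  have ag: "ann T w (Mv e f)" by (rule ann_Mv[OF cf fin an])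
  have gd: "\<And>y. (Mv e f has_real_derivative Dq e f y) (at y)" by (rule Mv_deriv[OF cf e])
  have key: "(\<Sum>t\<in>T. w t * (Dq e f (a * t + b) * t)) = 0" for a b
  proof -
    define \<Phi> where "\<Phi> a' = (\<Sum>t\<in>T. w t * Mv e f (a' * t + b))" for a'
    have c0: "\<Phi> a' = 0" for a' using ag by (simp add: ann_def \<Phi>_def)
    have d: "(\<Phi> has_real_derivative (\<Sum>t\<in>T. w t * (Dq e f (a * t + b) * t))) (at a)"
      unfolding \<Phi>_def
    proof (rule DERIV_sum)
      fix t assume "t \<in> T"
      have "((\<lambda>x. Mv e f (x * t + b)) has_real_derivative (Dq e f (a * t + b) * t)) (at a)"
        by (rule DERIV_chain2[OF gd]) (auto intro!: derivative_eq_intros)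
      then show "((\<lambda>x. w t * Mv e f (x * t + b)) has_real_derivative w t * (Dq e f (a * t + b) * t)) (at a)"
        by (rule DERIV_cmult)
    qed
    have "\<Phi> = (\<lambda>_. 0)" by (simp add: fun_eq_iff c0)
    then have "(\<Phi> has_real_derivative 0) (at a)" by simp
    then show ?thesis using DERIV_unique[OF d] by simp
  qed
  have aD: "ann T w (Dq e f)" by (rule ann_Dq[OF an])
  show ?thesis
    unfolding ann_def
  proof (intro allI)
    fix a b
    have "(\<Sum>t\<in>T. w t * (t - c) * Dq e f (a * t + b)) = (\<Sum>t\<in>T. w t * (Dq e f (a * t + b) * t)) - c * (\<Sum>t\<in>T. w t * Dq e f (a * t + b))"
      by (simp add: sum_subtractf[symmetric] sum_distrib_left algebra_simps)
    also have "\<dots> = 0" using key aD by (simp add: ann_def)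
    finally show "(\<Sum>t\<in>T. w t * (t - c) * Dq e f (a * t + b)) = 0" .
  qed
qed

fun Dqs :: "real list \<Rightarrow> (real \<Rightarrow> real) \<Rightarrow> real \<Rightarrow> real" where
  "Dqs [] f = f"
| "Dqs (e # es) f = Dq e (Dqs es f)"

lemma Dqs_snoc: "Dqs (es @ [e]) f = Dqs es (Dq e f)"
  by (induction es) auto

lemma cont_Dqs: "continuous_on UNIV f \<Longrightarrow> continuous_on UNIV (Dqs es f)"
  by (induction es) (auto intro: cont_Dq)

lemma ann_iter:
  assumes cf: "continuous_on UNIV f" and fin: "finite T" and an: "ann T w f"
  shows "length es = length cs \<Longrightarrow> (\<forall>e\<in>set es. e > 0) \<Longrightarrow>
    ann T (\<lambda>t. w t * prod_list (map (\<lambda>c. t - c) cs)) (Dqs es f)"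
proof (induction cs arbitrary: es)
  case Nil then show ?case using an by simp
next
  case (Cons c cs)
  then obtain e es' where es: "es = e # es'" by (cases es) auto
  with Cons have IH: "ann T (\<lambda>t. w t * prod_list (map (\<lambda>c. t - c) cs)) (Dqs es' f)" by simp
  have "ann T (\<lambda>t. w t * prod_list (map (\<lambda>c. t - c) cs) * (t - c)) (Dq e (Dqs es' f))"
    using Cons.prems es by (intro ann_step[OF cont_Dqs[OF cf] fin IH]) auto
  then show ?case by (simp add: es mult_ac)
qed

lemma lemB:
  "lip1 f \<Longrightarrow> (\<And>es. length es = k \<Longrightarrow> (\<forall>e\<in>set es. e > 0) \<Longrightarrow> (\<forall>x. Dqs es f x = 0)) \<Longrightarrow> aff1 f"
proof (induction k arbitrary: f)
  case 0
  then have "\<forall>x. f x = 0" using "0.prems"(2)[of "[]"] by simp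
  then show ?case unfolding aff1_def by (intro exI[of _ 0]) simp
next
  case (Suc k)
  note lipf = Suc.prems(1)
  obtain L where L: "\<And>x y. \<bar>f x - f y\<bar> \<le> L * \<bar>x - y\<bar>" using lipf unfolding lip1_def by blast
  have cf: "continuous_on UNIV f" by (rule lip1_cont[OF lipf])
  have const: "f (x + \<epsilon>) - f x = f \<epsilon> - f 0" if "\<epsilon> > 0" for \<epsilon> x
  proof -
    have "aff1 (Dq \<epsilon> f)"
    proof (rule Suc.IH)
      show "lip1 (Dq \<epsilon> f)" using lip1_Dq[OF lipf] that by simp
      fix es :: "real list" assume "length es = k" "\<forall>e\<in>set es. e > 0"
      then have "\<forall>x. Dqs (es @ [\<epsilon>]) f x = 0" using that by (intro Suc.prems(2)) auto
      then show "\<forall>x. Dqs es (Dq \<epsilon> f) x = 0" by (simp add: Dqs_snoc)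
    qed
    then obtain \<alpha> \<gamma> where ag: "\<And>x. Dq \<epsilon> f x = \<alpha> * x + \<gamma>" unfolding aff1_def by blast
    have bnd: "\<bar>Dq \<epsilon> f x\<bar> \<le> L" for x
    proof -
      have "\<bar>f (x + \<epsilon>) - f x\<bar> \<le> L * \<epsilon>" using L[of "x + \<epsilon>" x] that by simp
      then show ?thesis using that by (simp add: Dq_def abs_divide divide_le_eq)
    qed
    have "\<alpha> = 0"
    proof (rule ccontr)
      assume a0: "\<alpha> \<noteq> 0"
      define x where "x = (L + \<bar>\<gamma>\<bar> + 1) / \<alpha>"
      have "\<alpha> * x = L + \<bar>\<gamma>\<bar> + 1" using a0 by (simp add: x_def)
      then have "\<bar>\<alpha> * x + \<gamma>\<bar> > L" by linarith
      then show False using bnd[of x] ag[of x] by simp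
    qed
    then have "Dq \<epsilon> f x = Dq \<epsilon> f 0" using ag by simp
    then show ?thesis using that by (simp add: Dq_def)
  qed
  define \<kappa> where "\<kappa> = f 1 - f 0"
  define K where "K = integral {0..1} (\<lambda>u. f u - f 0)"
  have Mv1: "Mv 1 f x = f x + K" for x
  proof -
    have "integral {0..1} (\<lambda>u. f (x + u)) = integral {0..1} (\<lambda>u. f x + (f u - f 0))"
    proof (rule integral_cong)
      fix u :: real assume "u \<in> {0..1}"
      then show "f (x + u) = f x + (f u - f 0)"
        using const[of u x] by (cases "u = 0") auto
    qed
    also have "\<dots> = integral {0..1} (\<lambda>u::real. f x) + K"
    proof -
      have i1: "(\<lambda>u. f x) integrable_on {0..1::real}" by (rule integrable_continuous_real) (rule continuous_on_const)
      have i2: "(\<lambda>u. f u - f 0) integrable_on {0..1::real}"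
        by (intro integrable_continuous_real continuous_on_diff continuous_on_const continuous_on_subset[OF cf]) auto
      show ?thesis unfolding K_def
        by (rule Henstock_Kurzweil_Integration.integral_add[OF i1 i2])
    qed
    also have "integral {0..1} (\<lambda>u::real. f x) = f x"
      by (simp add: integral_const_real content_real)
    finally show ?thesis by (simp add: Mv_def)
  qed
  have "((\<lambda>x. Mv 1 f x - \<kappa> * x) has_real_derivative 0) (at x)" for x
  proof -
    have "((\<lambda>x. Mv 1 f x - \<kappa> * x) has_real_derivative (Dq 1 f x - \<kappa> * 1)) (at x)"
      by (intro DERIV_diff Mv_deriv[OF cf] DERIV_cmult DERIV_ident) simp
    moreover have "Dq 1 f x = \<kappa>" using const[of 1 x] by (simp add: Dq_def \<kappa>_def)
    ultimately show ?thesis by simp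
  qed
  then have "Mv 1 f x - \<kappa> * x = Mv 1 f 0 - \<kappa> * 0" for x
    by (rule DERIV_isconst_all[rule_format])
  then have "f x = \<kappa> * x + (Mv 1 f 0 - K)" for x
  proof -
    assume h: "\<And>x. Mv 1 f x - \<kappa> * x = Mv 1 f 0 - \<kappa> * 0"
    have "Mv 1 f x - \<kappa> * x = Mv 1 f 0" using h[of x] by simp
    then show ?thesis using Mv1[of x] by linarith
  qed
  then show ?case unfolding aff1_def by blast
qed


inductive_set spn :: "(real \<Rightarrow> real) \<Rightarrow> (real \<Rightarrow> real) set" for h where
  base: "(\<lambda>s. c * h (a * s + b)) \<in> spn h"
| add: "H1 \<in> spn h \<Longrightarrow> H2 \<in> spn h \<Longrightarrow> (\<lambda>s. H1 s + H2 s) \<in> spn h"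

lemma spn_zero: "(\<lambda>s. 0) \<in> spn h"
  using spn.base[of 0 h 0 0] by simp

lemma spn_scale: "H \<in> spn h \<Longrightarrow> (\<lambda>s. r * H s) \<in> spn h"
proof (induction rule: spn.induct)
  case (base c a b)
  then show ?case using spn.base[of "r * c" h a b] by (simp add: mult.assoc)
next
  case (add H1 H2)
  then show ?case using spn.add[OF add.IH] by (simp add: distrib_left)
qed

lemma spn_sum: "finite I \<Longrightarrow> (\<forall>i\<in>I. B i \<in> spn h) \<Longrightarrow> (\<lambda>s. \<Sum>i\<in>I. B i s) \<in> spn h"
proof (induction I rule: finite_induct)
  case empty then show ?case using spn_zero by simp
next
  case (insert x F)
  then have "(\<lambda>s. B x s + (\<Sum>i\<in>F. B i s)) \<in> spn h" by (intro spn.add) auto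
  then show ?case using insert by simp
qed

lemma spn_interp:
  assumes lip: "lip1 h" and naff: "\<not> aff1 h" and fin: "finite T"
  shows "\<forall>z. \<exists>H\<in>spn h. \<forall>t\<in>T. H t = z t"
  using fin
proof (induction T rule: finite_induct)
  case empty then show ?case using spn_zero by blast
next
  case (insert t0 T')
  show ?case
  proof (cases "\<exists>K\<in>spn h. (\<forall>t\<in>T'. K t = 0) \<and> K t0 \<noteq> 0")
    case True
    then obtain K where K: "K \<in> spn h" "\<forall>t\<in>T'. K t = 0" "K t0 \<noteq> 0" by blast
    show ?thesis
    proof
      fix z
      obtain H where H: "H \<in> spn h" "\<forall>t\<in>T'. H t = z t" using insert.IH by blast
      define H' where "H' = (\<lambda>s. H s + ((z t0 - H t0) / K t0) * K s)"
      have "H' \<in> spn h" unfolding H'_def by (intro spn.add H spn_scale K)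
      moreover have "\<forall>t\<in>insert t0 T'. H' t = z t"
        using H K by (auto simp: H'_def)
      ultimately show "\<exists>H\<in>spn h. \<forall>t\<in>insert t0 T'. H t = z t" by blast
    qed
  next
    case False
    then have noK: "\<And>K. K \<in> spn h \<Longrightarrow> \<forall>t\<in>T'. K t = 0 \<Longrightarrow> K t0 = 0" by blast
    have "\<forall>t\<in>T'. \<exists>H\<in>spn h. \<forall>s\<in>T'. H s = (if s = t then 1 else 0)"
    proof
      fix t assume "t \<in> T'"
      show "\<exists>H\<in>spn h. \<forall>s\<in>T'. H s = (if s = t then 1 else 0)"
        using insert.IH[rule_format, of "\<lambda>s. if s = t then 1 else 0"] by blast
    qed
    then obtain B where B: "\<And>t. t \<in> T' \<Longrightarrow> B t \<in> spn h" "\<And>t s. t \<in> T' \<Longrightarrow> s \<in> T' \<Longrightarrow> B t s = (if s = t then 1 else 0)"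
      by metis
    define r where "r t = B t t0" for t
    have rep: "H t0 = (\<Sum>t\<in>T'. H t * r t)" if H: "H \<in> spn h" for H
    proof -
      define K where "K = (\<lambda>s. H s + (-1) * (\<Sum>t\<in>T'. H t * B t s))"
      have "(\<lambda>s. \<Sum>t\<in>T'. H t * B t s) \<in> spn h"
        using insert.hyps(1) B(1) by (intro spn_sum) (auto intro: spn_scale)
      then have "K \<in> spn h" unfolding K_def by (intro spn.add H spn_scale)
      moreover have "\<forall>s\<in>T'. K s = 0"
      proof
        fix s assume s: "s \<in> T'"
        have "(\<Sum>t\<in>T'. H t * B t s) = (\<Sum>t\<in>T'. if t = s then H t else 0)"
          by (rule sum.cong) (use s B(2) in auto)
        also have "\<dots> = H s" using s insert.hyps(1) by simp
        finally show "K s = 0" by (simp add: K_def)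
      qed
      ultimately have "K t0 = 0" by (rule noK)
      then show ?thesis by (simp add: K_def r_def)
    qed
    define w where "w t = (if t = t0 then 1 else - r t)" for t
    have annw: "ann (insert t0 T') w h"
      unfolding ann_def
    proof (intro allI)
      fix a b
      have "(\<lambda>s. 1 * h (a * s + b)) \<in> spn h" by (rule spn.base)
      then have e: "h (a * t0 + b) = (\<Sum>t\<in>T'. h (a * t + b) * r t)" using rep by fastforce
      have "(\<Sum>t\<in>insert t0 T'. w t * h (a * t + b)) = h (a * t0 + b) + (\<Sum>t\<in>T'. - r t * h (a * t + b))"
        using insert.hyps by (simp add: w_def) (rule sum.cong, auto)
      also have "\<dots> = 0" using e by (simp add: sum_negf mult.commute)
      finally show "(\<Sum>t\<in>insert t0 T'. w t * h (a * t + b)) = 0" .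
    qed
    define cs where "cs = sorted_list_of_set T'"
    have setcs: "set cs = T'" using insert.hyps(1) by (simp add: cs_def)
    have cf: "continuous_on UNIV h" by (rule lip1_cont[OF lip])
    have "aff1 h"
    proof (rule lemB[OF lip, of "length cs"])
      fix es :: "real list" assume les: "length es = length cs" and pos: "\<forall>e\<in>set es. e > 0"
      define P where "P t = prod_list (map (\<lambda>c. t - c) cs)" for t
      have an: "ann (insert t0 T') (\<lambda>t. w t * P t) (Dqs es h)"
        unfolding P_def by (rule ann_iter[OF cf finite.insertI[OF insert.hyps(1)] annw les pos])
      have P0: "P t = 0" if "t \<in> T'" for t
        using that setcs by (auto simp: P_def prod_list_zero_iff)
      have Pt0: "P t0 \<noteq> 0"
        using insert.hyps(2) setcs by (auto simp: P_def prod_list_zero_iff)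
      show "\<forall>x. Dqs es h x = 0"
      proof
        fix x
        have "(\<Sum>t\<in>insert t0 T'. w t * P t * Dqs es h (0 * t + x)) = 0"
          using an unfolding ann_def by blast
        moreover have "(\<Sum>t\<in>insert t0 T'. w t * P t * Dqs es h (0 * t + x)) = P t0 * Dqs es h x"
          using insert.hyps P0 by (simp add: w_def)
        ultimately show "Dqs es h x = 0" using Pt0 by simp
      qed
    qed
    with naff show ?thesis by blast
  qed
qed


lemma vec_expand: "(\<Sum>k\<in>UNIV. (y $ k) *\<^sub>R axis k (1::real)) = (y :: real^'n)"
proof -
  have "(\<Sum>k\<in>UNIV. (y $ k) *\<^sub>R axis k (1::real)) $ i = y $ i" for i
  proof -
    have "(\<Sum>k\<in>UNIV. (y $ k) *\<^sub>R axis k (1::real)) $ i = (\<Sum>k\<in>UNIV. y $ k * (if i = k then 1 else 0))"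
      by (simp add: sum_component axis_def)
    also have "\<dots> = (\<Sum>k\<in>UNIV. if k = i then y $ k else 0)"
      by (rule sum.cong) auto
    also have "\<dots> = y $ i" by simp
    finally show ?thesis .
  qed
  then show ?thesis by (simp add: vec_eq_iff)
qed

lemma linear_inner_rep:
  fixes L :: "real^'n \<Rightarrow> real"
  assumes "linear L"
  shows "\<exists>a. \<forall>x. L x = a \<bullet> x"
proof (intro exI allI)
  fix x :: "real^'n"
  have "L x = L (\<Sum>k\<in>UNIV. (x $ k) *\<^sub>R axis k (1::real))" by (simp add: vec_expand)
  also have "\<dots> = (\<Sum>k\<in>UNIV. x $ k * L (axis k 1))"
    by (simp add: linear_sum[OF assms] linear_scale[OF assms])
  also have "\<dots> = (\<chi> k. L (axis k 1)) \<bullet> x"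
    by (simp add: inner_vec_def mult.commute)
  finally show "L x = (\<chi> k. L (axis k 1)) \<bullet> x" .
qed

lemma line_nonaffine:
  fixes F :: "real^'n \<Rightarrow> real"
  assumes "\<not> affine_scalar F"
  shows "\<exists>u b0. \<not> aff1 (\<lambda>s. F (s *\<^sub>R u - b0))"
proof (rule ccontr)
  assume "\<not> ?thesis"
  then have lines: "\<And>u b0. aff1 (\<lambda>s. F (s *\<^sub>R u - b0))" by blast
  define L where "L x = F x - F 0" for x
  have hom: "L (s *\<^sub>R x) = s * L x" for s x
  proof -
    obtain \<alpha> \<gamma> where ag: "\<And>s. F (s *\<^sub>R x - 0) = \<alpha> * s + \<gamma>" using lines[of x 0] unfolding aff1_def by blast
    have "F 0 = \<gamma>" using ag[of 0] by simp
    moreover have "F x = \<alpha> + \<gamma>" using ag[of 1] by simp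
    ultimately have "F (s *\<^sub>R x) = s * (F x - F 0) + F 0" using ag[of s] by (simp add: algebra_simps)
    then show ?thesis unfolding L_def by simp
  qed
  have add: "L (x + y) = L x + L y" for x y
  proof -
    obtain \<alpha> \<gamma> where ag: "\<And>s. F (s *\<^sub>R (y - x) - (- x)) = \<alpha> * s + \<gamma>"
      using lines[of "y - x" "- x"] unfolding aff1_def by blast
    have "F x = \<gamma>" using ag[of 0] by simp
    moreover have "F y = \<alpha> + \<gamma>" using ag[of 1] by simp
    moreover have "F ((1/2) *\<^sub>R (x + y)) = \<alpha> / 2 + \<gamma>"
    proof -
      have "(1/2::real) *\<^sub>R (y - x) - (- x) = (1/2) *\<^sub>R (x + y)"
        by (simp add: scaleR_diff_right scaleR_add_right)
      then show ?thesis using ag[of "1/2"] by simp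
    qed
    moreover have "L (x + y) = 2 * L ((1/2) *\<^sub>R (x + y))"
    proof -
      have "(2::real) *\<^sub>R ((1/2) *\<^sub>R (x + y)) = x + y" by (simp only: scaleR_scaleR) simp
      then show ?thesis using hom[of 2 "(1/2) *\<^sub>R (x + y)"] by simp
    qed
    ultimately show ?thesis unfolding L_def by argo
  qed
  have "linear L" by (rule linearI) (simp_all add: add hom)
  then obtain a where "\<And>x. L x = a \<bullet> x" using linear_inner_rep by blast
  then have "\<forall>x. F x = a \<bullet> x + F 0" unfolding L_def by (metis diff_add_cancel)
  then show False using assms unfolding affine_scalar_def by blast
qed

lemma shear_field_in_F:
  fixes F :: "(real^'n \<Rightarrow> real^'n) set"
  assumes ai: "affine_invariant F" and f: "f \<in> F"
  shows "(\<lambda>x. (c * (f ((\<alpha> * (a \<bullet> x) + \<beta>) *\<^sub>R u - b0) $ j)) *\<^sub>R v) \<in> F"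
proof -
  define W :: "real^'n^'n" where "W = (\<chi> i k. if k = j then c * v $ i else 0)"
  define A :: "real^'n^'n" where "A = (\<chi> i k. \<alpha> * u $ i * a $ k)"
  define b where "b = b0 - \<beta> *\<^sub>R u"
  have A: "A *v x - b = (\<alpha> * (a \<bullet> x) + \<beta>) *\<^sub>R u - b0" for x
  proof -
    have "(A *v x) $ i = (\<alpha> * (a \<bullet> x)) * u $ i" for i
      by (simp add: A_def matrix_vector_mult_def inner_vec_def sum_distrib_left mult_ac)
    then have "A *v x = (\<alpha> * (a \<bullet> x)) *\<^sub>R u" by (simp add: vec_eq_iff)
    then show ?thesis by (simp add: b_def algebra_simps)
  qed
  have W: "W *v y = (c * y $ j) *\<^sub>R v" for y
  proof -
    have "(W *v y) $ i = (c * y $ j) * v $ i" for i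
    proof -
      have "(W *v y) $ i = (\<Sum>k\<in>UNIV. (if k = j then c * v $ i else 0) * y $ k)"
        by (simp add: W_def matrix_vector_mult_def)
      also have "\<dots> = (\<Sum>k\<in>UNIV. if k = j then c * v $ i * y $ k else 0)"
        by (rule sum.cong) auto
      finally show ?thesis by simp
    qed
    then show ?thesis by (simp add: vec_eq_iff)
  qed
  have "(\<lambda>x. W *v f (A *v x - b)) \<in> F" using ai f unfolding affine_invariant_def by blast
  then show ?thesis by (simp add: A W)
qed

lemma shear_flow:
  fixes G :: "real^'n \<Rightarrow> real^'n"
  assumes lip: "glob_lipschitz G" and G: "\<And>x. G x = g (a \<bullet> x) *\<^sub>R v" and av: "a \<bullet> v = 0" and t: "0 \<le> t"
  shows "flow G t x = x + (t * g (a \<bullet> x)) *\<^sub>R v"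
proof -
  obtain C where C: "C-lipschitz_on UNIV G" using lip unfolding glob_lipschitz_def by blast
  define u where "u s = x + (s * g (a \<bullet> x)) *\<^sub>R v" for s
  have du1: "(u has_vector_derivative G (u s)) (at s within {0..t})" for s
  proof -
    have "(u has_vector_derivative (1 * g (a \<bullet> x)) *\<^sub>R v) (at s within {0..t})"
      unfolding u_def by (auto intro!: derivative_eq_intros)
    moreover have "G (u s) = g (a \<bullet> x) *\<^sub>R v"
      by (simp add: G u_def inner_add_right av)
    ultimately show ?thesis by simp
  qed
  have du: "\<forall>s\<in>{0..t}. (u has_vector_derivative G (u s)) (at s within {0..t})" using du1 by blast
  have "flow G t x = u t" by (rule flow_eq[OF C t _ du]) (simp add: u_def)
  then show ?thesis by (simp add: u_def)
qed

lemma comp_flows_append: "comp_flows (ps @ qs) = comp_flows qs \<circ> comp_flows ps"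
proof (induction ps)
  case Nil then show ?case by simp
next
  case (Cons p ps)
  obtain f t where "p = (f, t)" by fastforce
  with Cons show ?case by (simp add: o_assoc)
qed

lemma attainable_comp:
  assumes "\<phi> \<in> attainable F" "\<psi> \<in> attainable F"
  shows "\<psi> \<circ> \<phi> \<in> attainable F"
proof -
  obtain ps where ps: "ps \<noteq> []" "\<forall>(f, t) \<in> set ps. f \<in> F \<and> t \<ge> 0" "\<phi> = comp_flows ps"
    using assms(1) unfolding attainable_char by blast
  obtain qs where qs: "qs \<noteq> []" "\<forall>(f, t) \<in> set qs. f \<in> F \<and> t \<ge> 0" "\<psi> = comp_flows qs"
    using assms(2) unfolding attainable_char by blast
  have "\<psi> \<circ> \<phi> = comp_flows (ps @ qs)" by (simp add: comp_flows_append ps qs)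
  moreover have "ps @ qs \<noteq> []" "\<forall>(f, t) \<in> set (ps @ qs). f \<in> F \<and> t \<ge> 0" using ps qs by auto
  ultimately show ?thesis unfolding attainable_char by blast
qed

lemma attainable_single:
  assumes "G \<in> F" "t \<ge> 0"
  shows "flow G t \<in> attainable F"
proof -
  have "flow G t = comp_flows [(G, t)]" by simp
  then show ?thesis unfolding attainable_char using assms by (intro exI[of _ "[(G, t)]"]) auto
qed


lemma shear_attain:
  fixes F :: "(real^'n \<Rightarrow> real^'n) set"
  assumes ai: "affine_invariant F" and lipF: "\<forall>g\<in>F. glob_lipschitz g" and f: "f \<in> F"
    and av: "a \<bullet> v = 0"
    and H: "H \<in> spn (\<lambda>s. f (s *\<^sub>R u - b0) $ j)"
  shows "\<exists>\<phi>\<in>attainable F. \<forall>x. \<phi> x = x + H (a \<bullet> x) *\<^sub>R v"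
  using H
proof (induction rule: spn.induct)
  case (base c \<alpha> \<beta>)
  define G where "G = (\<lambda>x. (c * (f ((\<alpha> * (a \<bullet> x) + \<beta>) *\<^sub>R u - b0) $ j)) *\<^sub>R v)"
  have GF: "G \<in> F" unfolding G_def by (rule shear_field_in_F[OF ai f])
  have "flow G 1 x = x + (1 * (c * f ((\<alpha> * (a \<bullet> x) + \<beta>) *\<^sub>R u - b0) $ j)) *\<^sub>R v" for x
    by (rule shear_flow[where g="\<lambda>s. c * (f ((\<alpha> * s + \<beta>) *\<^sub>R u - b0) $ j)" and a=a])
       (use lipF GF av in \<open>auto simp: G_def\<close>)
  moreover have "flow G 1 \<in> attainable F" by (rule attainable_single[OF GF]) simp
  ultimately show ?case by auto
next
  case (add H1 H2)
  then obtain \<phi>1 \<phi>2 where p1: "\<phi>1 \<in> attainable F" "\<forall>x. \<phi>1 x = x + H1 (a \<bullet> x) *\<^sub>R v"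
    and p2: "\<phi>2 \<in> attainable F" "\<forall>x. \<phi>2 x = x + H2 (a \<bullet> x) *\<^sub>R v" by blast
  have "\<phi>2 \<circ> \<phi>1 \<in> attainable F" by (rule attainable_comp[OF p1(1) p2(1)])
  moreover have "(\<phi>2 \<circ> \<phi>1) x = x + (H1 (a \<bullet> x) + H2 (a \<bullet> x)) *\<^sub>R v" for x
    using p1(2) p2(2) av by (simp add: inner_add_right scaleR_add_left)
  ultimately show ?case by blast
qed

lemma vec_shear:
  fixes F :: "(real^'n \<Rightarrow> real^'n) set"
  assumes ai: "affine_invariant F" and lipF: "\<forall>g\<in>F. glob_lipschitz g" and f: "f \<in> F"
    and lip: "lip1 (\<lambda>s. f (s *\<^sub>R u - b0) $ j)" and naff: "\<not> aff1 (\<lambda>s. f (s *\<^sub>R u - b0) $ j)"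
    and a0: "a \<noteq> 0" and finS: "finite S" and perp: "\<forall>s\<in>S. a \<bullet> \<Phi>0 s = 0"
  shows "\<exists>\<phi>\<in>attainable F. \<forall>x. a \<bullet> x \<in> S \<longrightarrow> \<phi> x = x + \<Phi>0 (a \<bullet> x)"
proof -
  let ?h = "\<lambda>s. f (s *\<^sub>R u - b0) $ j"
  define w where "w k = axis k 1 - (a $ k / (a \<bullet> a)) *\<^sub>R a" for k
  have aa: "a \<bullet> a \<noteq> 0" using a0 by simp
  have aw: "a \<bullet> w k = 0" for k
    using aa by (simp add: w_def inner_diff_right inner_axis)
  have "\<forall>k. \<exists>H\<in>spn ?h. \<forall>s\<in>S. H s = \<Phi>0 s $ k"
  proof
    fix k
    show "\<exists>H\<in>spn ?h. \<forall>s\<in>S. H s = \<Phi>0 s $ k"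
      using spn_interp[OF lip naff finS, rule_format, of "\<lambda>s. \<Phi>0 s $ k"] by blast
  qed
  then obtain Hk where Hk: "\<And>k. Hk k \<in> spn ?h" "\<And>k s. s \<in> S \<Longrightarrow> Hk k s = \<Phi>0 s $ k" by metis
  have comp: "\<exists>\<phi>\<in>attainable F. \<forall>x. \<phi> x = x + (\<Sum>k\<in>K. Hk k (a \<bullet> x) *\<^sub>R w k)" if "finite K" for K
    using that
  proof (induction K rule: finite_induct)
    case empty
    obtain \<phi> where "\<phi> \<in> attainable F" "\<forall>x. \<phi> x = x + (\<lambda>s. 0) (a \<bullet> x) *\<^sub>R (0::real^'n)"
      using shear_attain[OF ai lipF f _ spn_zero, of a 0] by auto
    then show ?case by auto
  next
    case (insert k K)
    then obtain \<phi> where p: "\<phi> \<in> attainable F" "\<forall>x. \<phi> x = x + (\<Sum>k\<in>K. Hk k (a \<bullet> x) *\<^sub>R w k)" by blast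
    obtain \<psi> where q: "\<psi> \<in> attainable F" "\<forall>x. \<psi> x = x + Hk k (a \<bullet> x) *\<^sub>R w k"
      using shear_attain[OF ai lipF f aw Hk(1)] by blast
    have "\<psi> \<circ> \<phi> \<in> attainable F" by (rule attainable_comp[OF p(1) q(1)])
    moreover have "(\<psi> \<circ> \<phi>) x = x + (\<Sum>k\<in>insert k K. Hk k (a \<bullet> x) *\<^sub>R w k)" for x
    proof -
      have "a \<bullet> \<phi> x = a \<bullet> x"
        using p(2) aw by (simp add: inner_add_right inner_sum_right)
      then show ?thesis using p(2) q(2) insert.hyps by (simp add: algebra_simps)
    qed
    ultimately show ?case by blast
  qed
  obtain \<phi> where p: "\<phi> \<in> attainable F" "\<forall>x. \<phi> x = x + (\<Sum>k\<in>UNIV. Hk k (a \<bullet> x) *\<^sub>R w k)"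
    using comp[of UNIV] by auto
  have "\<phi> x = x + \<Phi>0 (a \<bullet> x)" if "a \<bullet> x \<in> S" for x
  proof -
    let ?y = "\<Phi>0 (a \<bullet> x)"
    have "(\<Sum>k\<in>UNIV. Hk k (a \<bullet> x) *\<^sub>R w k) = (\<Sum>k\<in>UNIV. (?y $ k) *\<^sub>R w k)"
      using Hk(2)[OF that] by simp
    also have "\<dots> = (\<Sum>k\<in>UNIV. (?y $ k) *\<^sub>R axis k 1) - (\<Sum>k\<in>UNIV. ?y $ k * (a $ k / (a \<bullet> a))) *\<^sub>R a"
      by (simp add: w_def scaleR_diff_right sum_subtractf scaleR_sum_left)
    also have "(\<Sum>k\<in>UNIV. ?y $ k * (a $ k / (a \<bullet> a))) = (a \<bullet> ?y) / (a \<bullet> a)"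
      by (simp add: inner_vec_def sum_divide_distrib mult.commute)
    also have "a \<bullet> ?y = 0" using perp that by blast
    finally show ?thesis using p(2) by (simp add: vec_expand)
  qed
  with p(1) show ?thesis by blast
qed

lemma generic_dir:
  assumes "finite D" "0 \<notin> D"
  shows "\<exists>a::real^'n. \<forall>\<delta>\<in>D. a \<bullet> \<delta> \<noteq> 0"
proof (rule ccontr)
  assume "\<not> ?thesis"
  then have "UNIV \<subseteq> (\<Union>\<delta>\<in>D. {x::real^'n. \<delta> \<bullet> x = 0})" by (auto simp: inner_commute)
  moreover have "negligible (\<Union>\<delta>\<in>D. {x::real^'n. \<delta> \<bullet> x = 0})"
    using assms by (intro negligible_Union) (auto intro!: negligible_hyperplane)
  ultimately have "negligible (UNIV :: (real^'n) set)" using negligible_subset by blast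
  then show False by simp
qed


lemma lip1_line:
  fixes f :: "real^'n \<Rightarrow> real^'n"
  assumes "glob_lipschitz f"
  shows "lip1 (\<lambda>s. f (s *\<^sub>R u - b0) $ j)"
proof -
  obtain C where C: "C-lipschitz_on UNIV f" using assms unfolding glob_lipschitz_def by blast
  have "\<bar>f (s *\<^sub>R u - b0) $ j - f (s' *\<^sub>R u - b0) $ j\<bar> \<le> (C * norm u) * \<bar>s - s'\<bar>" for s s'
  proof -
    have "\<bar>f (s *\<^sub>R u - b0) $ j - f (s' *\<^sub>R u - b0) $ j\<bar> \<le> norm (f (s *\<^sub>R u - b0) - f (s' *\<^sub>R u - b0))"
      using component_le_norm_cart[of "f (s *\<^sub>R u - b0) - f (s' *\<^sub>R u - b0)" j] by simp
    also have "\<dots> \<le> C * dist (s *\<^sub>R u - b0) (s' *\<^sub>R u - b0)"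
      using lipschitz_onD[OF C, of "s *\<^sub>R u - b0" "s' *\<^sub>R u - b0"] by (simp add: dist_norm)
    also have "dist (s *\<^sub>R u - b0) (s' *\<^sub>R u - b0) = \<bar>s - s'\<bar> * norm u"
      by (simp add: dist_norm scaleR_diff_left[symmetric])
    finally show ?thesis by (simp add: mult_ac)
  qed
  then show ?thesis unfolding lip1_def by blast
qed

lemma dir2:
  fixes F :: "(real^'n \<Rightarrow> real^'n) set"
  assumes card: "CARD('n) \<ge> 2" and lipF: "\<forall>g\<in>F. glob_lipschitz g" and ai: "affine_invariant F"
    and ex: "\<exists>f\<in>F. \<exists>j. \<not> affine_scalar (\<lambda>x. f x $ j)"
  shows "exact_universal_interpolation F"
  unfolding exact_universal_interpolation_def
proof (intro allI impI)
  fix N :: nat and xs ys :: "nat \<Rightarrow> real^'n"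
  assume N1: "N \<ge> 1" and ixs: "inj_on xs {..<N}" and iys: "inj_on ys {..<N}"
  obtain f j where f: "f \<in> F" and nj: "\<not> affine_scalar (\<lambda>x. f x $ j)" using ex by blast
  obtain u b0 where naff: "\<not> aff1 (\<lambda>s. f (s *\<^sub>R u - b0) $ j)"
    using line_nonaffine[OF nj] by blast
  have lip: "lip1 (\<lambda>s. f (s *\<^sub>R u - b0) $ j)" using lip1_line lipF f by blast
  note VS = vec_shear[OF ai lipF f lip naff]
  obtain j1 j2 :: 'n where j12: "j1 \<noteq> j2" using two_indices[OF card] by blast
  define D where "D = {xs i - xs k | i k. i < N \<and> k < N \<and> i \<noteq> k} \<union> {ys i - ys k | i k. i < N \<and> k < N \<and> i \<noteq> k} \<union> {axis j1 1}"
  have finD: "finite D"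
  proof -
    have s1: "{xs i - xs k | i k. i < N \<and> k < N \<and> i \<noteq> k} \<subseteq> (\<lambda>(i, k). xs i - xs k) ` ({..<N} \<times> {..<N})" by auto
    have s2: "{ys i - ys k | i k. i < N \<and> k < N \<and> i \<noteq> k} \<subseteq> (\<lambda>(i, k). ys i - ys k) ` ({..<N} \<times> {..<N})" by auto
    have f1: "finite {xs i - xs k | i k. i < N \<and> k < N \<and> i \<noteq> k}"
      by (rule finite_subset[OF s1]) (intro finite_imageI finite_cartesian_product; simp)
    have f2: "finite {ys i - ys k | i k. i < N \<and> k < N \<and> i \<noteq> k}"
      by (rule finite_subset[OF s2]) (intro finite_imageI finite_cartesian_product; simp)
    show ?thesis unfolding D_def using f1 f2 by simp
  qed
  have D0: "0 \<notin> D"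
    using ixs iys unfolding D_def inj_on_def by (auto simp: axis_eq_0_iff)
  obtain a :: "real^'n" where a: "\<forall>\<delta>\<in>D. a \<bullet> \<delta> \<noteq> 0" using generic_dir[OF finD D0] by blast
  have a0: "a \<noteq> 0" using a unfolding D_def by auto
  have injax: "inj_on (\<lambda>i. a \<bullet> xs i) {..<N}"
    unfolding inj_on_def
  proof (intro ballI impI)
    fix i k assume ik: "i \<in> {..<N}" "k \<in> {..<N}" "a \<bullet> xs i = a \<bullet> xs k"
    show "i = k"
    proof (rule ccontr)
      assume "i \<noteq> k"
      then have "xs i - xs k \<in> D" using ik unfolding D_def by blast
      then show False using a ik(3) by (auto simp: inner_diff_right)
    qed
  qed
  have injay: "inj_on (\<lambda>i. a \<bullet> ys i) {..<N}"
    unfolding inj_on_def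
  proof (intro ballI impI)
    fix i k assume ik: "i \<in> {..<N}" "k \<in> {..<N}" "a \<bullet> ys i = a \<bullet> ys k"
    show "i = k"
    proof (rule ccontr)
      assume "i \<noteq> k"
      then have "ys i - ys k \<in> D" using ik unfolding D_def by blast
      then show False using a ik(3) by (auto simp: inner_diff_right)
    qed
  qed
  define b :: "real^'n" where "b = (if a $ j1 = 0 \<and> a $ j2 = 0 then axis j1 1 else a $ j2 *\<^sub>R axis j1 1 - a $ j1 *\<^sub>R axis j2 1)"
  have ab: "a \<bullet> b = 0"
    by (auto simp: b_def inner_diff_right inner_axis)
  have b0': "b \<noteq> 0"
  proof
    assume "b = 0"
    then have "b $ j1 = 0" "b $ j2 = 0" by auto
    then show False using j12 by (auto simp: b_def axis_def split: if_splits)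
  qed
  have bb: "b \<bullet> b \<noteq> 0" using b0' by simp
  have aa: "a \<bullet> a \<noteq> 0" using a0 by simp
  define idx1 where "idx1 = inv_into {..<N} (\<lambda>i. a \<bullet> xs i)"
  define \<Phi>1 where "\<Phi>1 s = ((real (idx1 s) - b \<bullet> xs (idx1 s)) / (b \<bullet> b)) *\<^sub>R b" for s
  obtain \<phi>1 where p1: "\<phi>1 \<in> attainable F" "\<forall>x. a \<bullet> x \<in> (\<lambda>i. a \<bullet> xs i) ` {..<N} \<longrightarrow> \<phi>1 x = x + \<Phi>1 (a \<bullet> x)"
    using VS[OF a0, of "(\<lambda>i. a \<bullet> xs i) ` {..<N}" \<Phi>1] ab by (auto simp: \<Phi>1_def)
  define zs where "zs i = xs i + ((real i - b \<bullet> xs i) / (b \<bullet> b)) *\<^sub>R b" for i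
  have inv1: "idx1 (a \<bullet> xs i) = i" if "i < N" for i
    using inv_into_f_f[OF injax, of i] that by (simp add: idx1_def)
  have z1: "\<phi>1 (xs i) = zs i" if "i < N" for i
    using p1(2) that inv1[OF that] by (auto simp: \<Phi>1_def zs_def)
  have bz: "b \<bullet> zs i = real i" for i
    using bb by (simp add: zs_def inner_add_right)
  define \<Phi>2 where "\<Phi>2 s = ((a \<bullet> ys (nat \<lfloor>s\<rfloor>) - a \<bullet> zs (nat \<lfloor>s\<rfloor>)) / (a \<bullet> a)) *\<^sub>R a" for s :: real
  obtain \<phi>2 where p2: "\<phi>2 \<in> attainable F" "\<forall>x. b \<bullet> x \<in> real ` {..<N} \<longrightarrow> \<phi>2 x = x + \<Phi>2 (b \<bullet> x)"
    using VS[OF b0', of "real ` {..<N}" \<Phi>2] ab by (auto simp: \<Phi>2_def inner_commute)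
  define us where "us i = zs i + ((a \<bullet> ys i - a \<bullet> zs i) / (a \<bullet> a)) *\<^sub>R a" for i
  have z2: "\<phi>2 (zs i) = us i" if "i < N" for i
    using p2(2) that bz by (auto simp: \<Phi>2_def us_def)
  have au: "a \<bullet> us i = a \<bullet> ys i" for i
    using aa by (simp add: us_def inner_add_right)
  define idx3 where "idx3 = inv_into {..<N} (\<lambda>i. a \<bullet> ys i)"
  define \<Phi>3 where "\<Phi>3 s = ys (idx3 s) - us (idx3 s)" for s
  obtain \<phi>3 where p3: "\<phi>3 \<in> attainable F" "\<forall>x. a \<bullet> x \<in> (\<lambda>i. a \<bullet> ys i) ` {..<N} \<longrightarrow> \<phi>3 x = x + \<Phi>3 (a \<bullet> x)"
    using VS[OF a0, of "(\<lambda>i. a \<bullet> ys i) ` {..<N}" \<Phi>3] au by (auto simp: \<Phi>3_def inner_diff_right)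
  have inv3: "idx3 (a \<bullet> ys i) = i" if "i < N" for i
    using inv_into_f_f[OF injay, of i] that by (simp add: idx3_def)
  have z3: "\<phi>3 (us i) = ys i" if "i < N" for i
    using p3(2) that au[of i] inv3[OF that] by (auto simp: \<Phi>3_def)
  have "\<phi>3 \<circ> \<phi>2 \<circ> \<phi>1 \<in> attainable F"
    by (intro attainable_comp p1(1) p2(1) p3(1))
  moreover have "\<forall>i<N. (\<phi>3 \<circ> \<phi>2 \<circ> \<phi>1) (xs i) = ys i"
    using z1 z2 z3 by simp
  ultimately show "\<exists>\<phi>\<in>attainable F. \<forall>i<N. \<phi> (xs i) = ys i" by blast
qed

theorem theorem2p6:
  fixes F :: "(real^'n \<Rightarrow> real^'n) set"
  assumes "CARD('n) \<ge> 2"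
    and "\<forall>g\<in>F. glob_lipschitz g"
    and "affine_invariant F"
  shows "exact_universal_interpolation F \<longleftrightarrow>
         (\<exists>f\<in>F. \<exists>j. \<not> affine_scalar (\<lambda>x. f x $ j))"
  using dir1[OF assms(1,2)] dir2[OF assms] by blast


end
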